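(* For $|q|<1$ and nonzero complex $a,b,c$, $$\begin{aligned}&(q;q^2)_\infty^2\big([a,b,-c;q]_\infty+[a,-b,c;q]_\infty+[-a,b,c;q]_\infty\big)\\&\quad=(a,q/a;q)_\infty[bc,bq/c;q^2]_\infty+(b,q/b;q)_\infty[ac,aq/c;q^2]_\infty+(c,q/c;q)_\infty[ab,aq/b;q^2]_\infty.\end{aligned}$$
   Context: $(z;p)_\infty=\prod_{k\ge0}(1-zp^k)$, $(z_1,\dots,z_n;p)_\infty=\prod_j(z_j;p)_\infty$, $[z;p]_\infty=(z,p/z;p)_\infty$, and $[z_1,\dots,z_n;p]_\infty=\prod_j[z_j;p]_\infty$. *)

theory Defs
  imports "HOL-Analysis.Analysis"
begin

definition qpoch_inf :: "complex \<Rightarrow> complex \<Rightarrow> complex" where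
  "qpoch_inf z p = (\<Prod>k. (1 - z * p ^ k))"

definition qtheta :: "complex \<Rightarrow> complex \<Rightarrow> complex" where
  "qtheta z p = qpoch_inf z p * qpoch_inf (p / z) p"

end

theory Submission
  imports Defs
begin


lemma qp_conv:
  fixes x q :: complex assumes "norm q < 1"
  shows "convergent_prod (\<lambda>k. 1 - x * q ^ k)"
proof -
  have "summable (\<lambda>k. norm x * norm q ^ k)"
    using assms by (intro summable_mult summable_geometric) auto
  hence "summable (\<lambda>k. norm ((1 - x * q ^ k) - 1))"
    by (simp add: norm_mult norm_power)
  thus ?thesis
    by (intro abs_convergent_prod_imp_convergent_prod summable_imp_abs_convergent_prod)
qed

lemma qp_lim:
  fixes x q :: complex assumes "norm q < 1"
  shows "(\<lambda>n. \<Prod>k<n. 1 - x * q ^ k) \<longlonglongrightarrow> qpoch_inf x q"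
proof -
  have "(\<lambda>n. \<Prod>k\<le>n. 1 - x * q ^ k) \<longlonglongrightarrow> qpoch_inf x q"
    unfolding qpoch_inf_def by (rule convergent_prod_LIMSEQ[OF qp_conv[OF assms]])
  hence "(\<lambda>n. \<Prod>k<Suc n. 1 - x * q ^ k) \<longlonglongrightarrow> qpoch_inf x q"
    by (simp add: lessThan_Suc_atMost)
  thus ?thesis by (rule LIMSEQ_imp_Suc)
qed

lemma qp_nz:
  fixes x q :: complex assumes "norm q < 1" "\<And>k. x * q ^ k \<noteq> 1"
  shows "qpoch_inf x q \<noteq> 0"
  unfolding qpoch_inf_def using assms qp_conv[OF assms(1)]
  by (intro prodinf_nonzero) auto



definition tri :: "nat \<Rightarrow> nat" where "tri k = k * (k - 1) div 2"

lemma tri_Suc: "tri (Suc k) = tri k + k"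
  unfolding tri_def by (induction k) (auto simp: algebra_simps)

lemma tri_0[simp]: "tri 0 = 0" and tri_1[simp]: "tri 1 = 0" by (auto simp: tri_def)

lemma tri_int: "int (tri k) = int k * (int k - 1) div 2"
  unfolding tri_def by (cases k) (auto simp: zdiv_int of_nat_mult algebra_simps)

fun gb :: "complex \<Rightarrow> nat \<Rightarrow> nat \<Rightarrow> complex" where
  "gb q 0 k = (if k = 0 then 1 else 0)"
| "gb q (Suc M) 0 = 1"
| "gb q (Suc M) (Suc k) = q ^ Suc k * gb q M (Suc k) + gb q M k"

lemma gb_zero: "M < k \<Longrightarrow> gb q M k = 0"
proof (induction M arbitrary: k)
  case 0 thus ?case by simp
next
  case (Suc M) thus ?case by (cases k) auto
qed

lemma rothe:
  "(\<Prod>i<M. 1 + x * q ^ i) = (\<Sum>k\<le>M. gb q M k * q ^ tri k * x ^ k)"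
proof (induction M arbitrary: x)
  case 0 thus ?case by simp
next
  case (Suc M)
  have "(\<Prod>i<Suc M. 1 + x * q ^ i) = (1 + x) * (\<Prod>i<M. 1 + (x * q) * q ^ i)"
    by (subst prod.lessThan_Suc_shift) (simp add: mult.assoc)
  also have "\<dots> = (1 + x) * (\<Sum>k\<le>M. gb q M k * q ^ tri k * (x*q) ^ k)"
    by (simp add: Suc.IH)
  also have "\<dots> = (\<Sum>k\<le>M. gb q M k * q ^ tri k * q ^ k * x ^ k)
      + (\<Sum>k\<le>M. gb q M k * q ^ tri (Suc k) * x ^ Suc k)"
    by (simp add: distrib_right sum_distrib_left tri_Suc power_add power_mult_distrib sum.distrib algebra_simps)
  also have "(\<Sum>k\<le>M. gb q M k * q ^ tri k * q ^ k * x ^ k)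
      = 1 + (\<Sum>k\<le>M. gb q M (Suc k) * q ^ Suc k * q ^ tri (Suc k) * x ^ Suc k)"
  proof -
    have "(\<Sum>k\<le>M. gb q M (Suc k) * q ^ Suc k * q ^ tri (Suc k) * x ^ Suc k)
        = (\<Sum>k\<le>Suc M. gb q M k * q ^ tri k * q ^ k * x ^ k) - gb q M 0"
      by (subst sum.atMost_Suc_shift) (simp add: algebra_simps)
    also have "\<dots> = (\<Sum>k\<le>M. gb q M k * q ^ tri k * q ^ k * x ^ k) - 1"
      by (cases M) (simp_all add: gb_zero)
    finally show ?thesis by simp
  qed
  also have "1 + (\<Sum>k\<le>M. gb q M (Suc k) * q ^ Suc k * q ^ tri (Suc k) * x ^ Suc k)
      + (\<Sum>k\<le>M. gb q M k * q ^ tri (Suc k) * x ^ Suc k)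
      = (\<Sum>k\<le>Suc M. gb q (Suc M) k * q ^ tri k * x ^ k)"
    by (subst sum.atMost_Suc_shift) (simp add: sum.distrib algebra_simps)
  finally show ?case .
qed



definition qf :: "complex \<Rightarrow> nat \<Rightarrow> complex" where
  "qf q n = (\<Prod>i<n. 1 - q ^ Suc i)"

lemma qf_Suc: "qf q (Suc n) = qf q n * (1 - q ^ Suc n)"
  by (simp add: qf_def)

lemma gb_closed: "k \<le> M \<Longrightarrow> gb q M k * qf q k * qf q (M - k) = qf q M"
proof (induction M arbitrary: k)
  case 0 thus ?case by (simp add: qf_def)
next
  case (Suc M)
  show ?case
  proof (cases k)
    case 0 thus ?thesis by (simp add: qf_def)
  next
    case (Suc j)
    show ?thesis
    proof (cases "j = M")
      case True
      have "gb q M M * qf q M * qf q 0 = qf q M" using Suc.IH[of M] by simp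
      hence "gb q M M * qf q M = qf q M" by (simp add: qf_def)
      hence "gb q M M * (qf q M * (1 - q ^ Suc M)) = qf q M * (1 - q ^ Suc M)"
        by (metis mult.assoc)
      hence "gb q (Suc M) (Suc M) * qf q (Suc M) = qf q (Suc M)"
        by (simp only: gb.simps gb_zero[of M "Suc M"] qf_Suc) simp
      thus ?thesis using True Suc by (simp add: qf_def[of q 0])
    next
      case False
      hence jM: "j + 1 \<le> M" using Suc Suc.prems by simp
      have I1: "gb q M (Suc j) * qf q (Suc j) * qf q (M - Suc j) = qf q M"
        using Suc.IH jM by simp
      have I2: "gb q M j * qf q j * qf q (M - j) = qf q M"
        using Suc.IH jM by simp
      have e1: "qf q (M - j) = qf q (M - Suc j) * (1 - q ^ (M - j))"
        using jM qf_Suc[of q "M - Suc j"] by (simp add: Suc_diff_Suc)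
      have "gb q (Suc M) k * qf q k * qf q (Suc M - k)
          = q ^ Suc j * (gb q M (Suc j) * qf q (Suc j) * qf q (M - Suc j)) * (1 - q ^ (M - j))
            + (gb q M j * qf q j * qf q (M - j)) * (1 - q ^ Suc j)"
      proof -
        have "gb q (Suc M) k * qf q k * qf q (Suc M - k)
           = (q ^ Suc j * gb q M (Suc j) + gb q M j) * (qf q j * (1 - q ^ Suc j))
             * (qf q (M - Suc j) * (1 - q ^ (M - j)))"
          using Suc by (simp only: gb.simps qf_Suc e1 diff_Suc_Suc)
        also have "\<dots> = q ^ Suc j * (gb q M (Suc j) * (qf q j * (1 - q ^ Suc j)) * qf q (M - Suc j)) * (1 - q ^ (M - j))
            + (gb q M j * qf q j * (qf q (M - Suc j) * (1 - q ^ (M - j)))) * (1 - q ^ Suc j)"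
          by (simp only: algebra_simps)
        finally show ?thesis by (simp only: qf_Suc e1)
      qed
      also have "\<dots> = q ^ Suc j * qf q M * (1 - q ^ (M - j)) + qf q M * (1 - q ^ Suc j)"
        by (simp only: I1 I2)
      also have "\<dots> = qf q M * (q ^ Suc j * (1 - q ^ (M - j)) + (1 - q ^ Suc j))"
        by (simp only: algebra_simps)
      also have "q ^ Suc j * (1 - q ^ (M - j)) = q ^ Suc j - q ^ Suc M"
        using jM by (simp add: algebra_simps power_add[symmetric])
      finally show ?thesis by (simp add: qf_Suc)
    qed
  qed
qed

lemma qf_lim: "norm q < 1 \<Longrightarrow> qf q \<longlonglongrightarrow> qpoch_inf q q"
proof -
  assume "norm q < 1"
  moreover have "qf q = (\<lambda>n. \<Prod>k<n. 1 - q * q ^ k)" by (simp add: qf_def fun_eq_iff)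
  ultimately show ?thesis using qp_lim[of q q] by simp
qed

lemma qf_nz: "norm q < 1 \<Longrightarrow> qf q n \<noteq> 0"
proof -
  assume a: "norm q < 1"
  have "q ^ Suc i \<noteq> 1" for i
  proof
    assume "q ^ Suc i = 1"
    hence "norm q ^ Suc i = 1" by (metis norm_one norm_power)
    moreover have "norm q ^ Suc i < 1"
    proof -
      have "norm q ^ i \<le> 1" using a by (intro power_le_one) auto
      hence "norm q * norm q ^ i \<le> norm q" by (simp add: mult_left_le)
      thus ?thesis using a by simp
    qed
    ultimately show False by simp
  qed
  thus ?thesis by (simp add: qf_def)
qed

lemma Q_nz: "norm q < 1 \<Longrightarrow> qpoch_inf q q \<noteq> 0"
proof -
  assume a: "norm q < 1"
  have "q * q ^ k \<noteq> 1" for k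
  proof
    assume "q * q ^ k = 1"
    hence "norm q ^ Suc k = 1" by (metis norm_one norm_power power_Suc)
    moreover have "norm q ^ Suc k < 1"
    proof -
      have "norm q ^ k \<le> 1" using a by (intro power_le_one) auto
      hence "norm q * norm q ^ k \<le> norm q" by (simp add: mult_left_le)
      thus ?thesis using a by simp
    qed
    ultimately show False by simp
  qed
  thus ?thesis using qp_nz[OF a] by blast
qed

lemma gb_bound:
  assumes "norm q < 1"
  obtains K where "K > 0" "\<And>M k. norm (gb q M k) \<le> K"
proof -
  have "Bseq (qf q)" using qf_lim[OF assms] by (rule convergent_imp_Bseq[OF convergentI])
  then obtain K1 where K1: "K1 > 0" "\<And>n. norm (qf q n) \<le> K1" by (auto simp: Bseq_def)
  have "Bseq (\<lambda>n. inverse (qf q n))"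
    by (rule Bfun_inverse[OF qf_lim[OF assms] Q_nz[OF assms]])
  then obtain K2 where K2: "K2 > 0" "\<And>n. norm (inverse (qf q n)) \<le> K2" by (auto simp: Bseq_def)
  have "norm (gb q M k) \<le> K1 * K2 * K2" for M k
  proof (cases "k \<le> M")
    case True
    have "gb q M k = qf q M * inverse (qf q k) * inverse (qf q (M - k))"
      using gb_closed[OF True] qf_nz[OF assms] by (auto simp: field_simps)
    hence "norm (gb q M k) = norm (qf q M) * norm (inverse (qf q k)) * norm (inverse (qf q (M - k)))"
      by (simp add: norm_mult)
    also have "\<dots> \<le> K1 * K2 * K2"
      using K1 K2 by (intro mult_mono) auto
    finally show ?thesis .
  next
    case False thus ?thesis using K1 K2 by (simp add: gb_zero)
  qed
  moreover have "K1 * K2 * K2 > 0" using K1 K2 by simp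
  ultimately show ?thesis using that by blast
qed

lemma gb_lim:
  assumes "norm q < 1"
  shows "(\<lambda>N. if \<bar>j\<bar> \<le> int N then gb q (2*N) (nat (int N + j)) else 0)
           \<longlonglongrightarrow> inverse (qpoch_inf q q)"
proof -
  let ?Q = "qpoch_inf q q"
  have lim_shift: "(\<lambda>N. qf q (nat (int N + i))) \<longlonglongrightarrow> ?Q" for i :: int
  proof -
    have "filterlim (\<lambda>N. nat (int N + i)) at_top at_top"
      unfolding filterlim_at_top eventually_at_top_linorder
    proof
      fix Z :: nat show "\<exists>N0. \<forall>N\<ge>N0. Z \<le> nat (int N + i)"
        by (rule exI[of _ "Z + nat (- i)"]) auto
    qed
    thus ?thesis by (rule filterlim_compose[OF qf_lim[OF assms]])
  qed
  have l2: "(\<lambda>N. qf q (2 * N)) \<longlonglongrightarrow> ?Q"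
  proof -
    have "filterlim (\<lambda>N::nat. 2 * N) at_top at_top"
      unfolding filterlim_at_top eventually_at_top_linorder
    proof
      fix Z :: nat show "\<exists>N0. \<forall>N\<ge>N0. Z \<le> 2 * N" by (rule exI[of _ Z]) auto
    qed
    thus ?thesis by (rule filterlim_compose[OF qf_lim[OF assms]])
  qed
  have "(\<lambda>N. qf q (2 * N) * inverse (qf q (nat (int N + j))) * inverse (qf q (nat (int N + - j))))
      \<longlonglongrightarrow> ?Q * inverse ?Q * inverse ?Q"
    by (intro tendsto_intros l2 lim_shift Q_nz[OF assms])
  hence L: "(\<lambda>N. qf q (2 * N) * inverse (qf q (nat (int N + j))) * inverse (qf q (nat (int N + - j))))
      \<longlonglongrightarrow> inverse ?Q"
    using Q_nz[OF assms] by simp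
  have ev: "eventually (\<lambda>N. qf q (2 * N) * inverse (qf q (nat (int N + j))) * inverse (qf q (nat (int N + - j)))
     = (if \<bar>j\<bar> \<le> int N then gb q (2*N) (nat (int N + j)) else 0)) sequentially"
    unfolding eventually_at_top_linorder
  proof (intro exI allI impI)
    fix N assume N: "nat \<bar>j\<bar> \<le> N"
    hence jN: "\<bar>j\<bar> \<le> int N" by simp
    have "nat (int N + j) \<le> 2 * N" using jN by simp
    have "gb q (2 * N) (nat (int N + j)) * qf q (nat (int N + j)) * qf q (nat (int N + - j)) = qf q (2*N)"
    proof -
      have "2 * N - nat (int N + j) = nat (int N + - j)" using jN by linarith
      thus ?thesis using gb_closed[OF \<open>nat (int N + j) \<le> 2 * N\<close>, of q] by simp
    qed
    thus "qf q (2 * N) * inverse (qf q (nat (int N + j))) * inverse (qf q (nat (int N + - j)))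
     = (if \<bar>j\<bar> \<le> int N then gb q (2*N) (nat (int N + j)) else 0)"
      using jN qf_nz[OF assms] by (auto simp: field_simps)
  qed
  show ?thesis by (rule Lim_transform_eventually[OF L ev])
qed



definition T :: "int \<Rightarrow> int" where "T a = a * (a - 1) div 2"

lemma T_add: "T (a + b) = T a + T b + a * b"
proof -
  have "even (a * (a - 1))" "even (b * (b - 1))" by auto
  then obtain k1 k2 where k: "a * (a - 1) = 2 * k1" "b * (b - 1) = 2 * k2"
    by (metis dvd_def)
  have "(a + b) * (a + b - 1) = 2 * (k1 + k2 + a * b)"
    using k by (simp add: algebra_simps)
  thus ?thesis unfolding T_def using k by simp
qed

lemma tri_T: "int (tri k) = T (int k)" by (simp add: tri_int T_def)

lemma prod_split_add:
  fixes f :: "nat \<Rightarrow> 'a::comm_monoid_mult" and N K :: nat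
  shows "(\<Prod>i<N+K. f i) = (\<Prod>i<N. f i) * (\<Prod>i<K. f (N + i))"
  by (induction K) (simp_all add: mult.assoc)

lemma prod_reflect: "(\<Prod>i<N. g (N - i)) = (\<Prod>m<N. g (Suc m))"
proof (induction N)
  case 0 thus ?case by simp
next
  case (Suc N)
  have "(\<Prod>i<Suc N. g (Suc N - i)) = g (Suc N) * (\<Prod>i<N. g (N - i))"
    by (subst prod.lessThan_Suc_shift) simp
  thus ?case using Suc by (simp add: mult.commute)
qed

lemma sum_lessThan_tri: "(\<Sum>i<N. i) = tri N"
  by (induction N) (simp_all add: tri_Suc)

lemma key_term:
  fixes q z :: complex and N :: nat and j :: int
  assumes q: "q \<noteq> 0" and z: "z \<noteq> 0"
  defines "x \<equiv> - z / q ^ N"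
  assumes j: "0 \<le> int N + j"
  shows "q ^ tri (nat (int N + j)) * x ^ nat (int N + j)
       = x ^ N * q ^ tri N * ((-1) powi j * q powi T j * z powi j)"
proof -
  have xe: "x powi n = (-1) powi n * z powi n * q powi (- int N * n)" for n
  proof -
    have "x = (-1) * z * inverse (q ^ N)" unfolding x_def by (simp add: divide_inverse)
    hence "x powi n = (-1) powi n * z powi n * (inverse (q ^ N)) powi n"
      by (simp only: power_int_mult_distrib)
    also have "(inverse (q ^ N)) powi n = q powi (- int N * n)"
      by (simp add: power_int_inverse power_int_power power_int_minus)
    finally show ?thesis .
  qed
  have "q ^ tri (nat (int N + j)) * x ^ nat (int N + j)
      = q powi T (int N + j) * x powi (int N + j)"
    using j by (simp add: power_int_of_nat[symmetric] tri_T del: power_int_of_nat)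
  also have "\<dots> = (-1) powi (int N + j) * z powi (int N + j) * (q powi T (int N + j) * q powi (- int N * (int N + j)))"
    by (simp add: xe)
  also have "q powi T (int N + j) * q powi (- int N * (int N + j)) = q powi (T (int N + j) + - int N * (int N + j))"
    using q power_int_add[of q "T (int N + j)" "- int N * (int N + j)"] by simp
  also have "T (int N + j) + - int N * (int N + j) = (- int N * int N + T (int N)) + T j"
    by (simp add: T_add algebra_simps)
  finally have A: "q ^ tri (nat (int N + j)) * x ^ nat (int N + j) =
     (- 1) powi (int N + j) * z powi (int N + j) * q powi (- int N * int N + T (int N) + T j)" .
  have "x ^ N * q ^ tri N * ((-1) powi j * q powi T j * z powi j)
     = x powi int N * q powi T (int N) * ((-1) powi j * q powi T j * z powi j)"
    by (simp add: power_int_of_nat[symmetric] tri_T del: power_int_of_nat)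
  also have "\<dots> = (-1) powi int N * (-1) powi j * (z powi int N * z powi j) *
       (q powi (- int N * int N) * q powi T (int N) * q powi T j)"
    by (simp only: xe mult_ac)
  finally have B: "x ^ N * q ^ tri N * ((-1) powi j * q powi T j * z powi j)
     = (-1) powi int N * (-1) powi j * (z powi int N * z powi j) *
       (q powi (- int N * int N) * q powi T (int N) * q powi T j)" .
  show ?thesis unfolding A B using q z power_int_add[of q "T (int N)" "- (int N*int N)"]
    by (simp add: power_int_add mult_ac)
qed

lemma fin_jtp:
  fixes q z :: complex
  assumes q: "q \<noteq> 0" and z: "z \<noteq> 0"
  shows "(\<Prod>i<N. (1 - z * q ^ i) * (1 - q ^ Suc i / z))
       = (\<Sum>j\<in>{- int N..int N}. gb q (2*N) (nat (int N + j)) * ((-1) powi j * q powi T j * z powi j))"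
proof -
  define x where "x = - z / q ^ N"
  have xnz: "x ^ N * q ^ tri N \<noteq> 0" using q z by (simp add: x_def)
  have "(\<Prod>i<2*N. 1 + x * q ^ i) = (\<Prod>i<N. 1 + x * q ^ i) * (\<Prod>i<N. 1 + x * q ^ (N + i))"
    using prod_split_add[of "\<lambda>i. 1 + x * q ^ i" N N] by (simp add: mult_2)
  also have "(\<Prod>i<N. 1 + x * q ^ (N + i)) = (\<Prod>i<N. 1 - z * q ^ i)"
    using q by (simp add: x_def power_add)
  also have "(\<Prod>i<N. 1 + x * q ^ i) = (\<Prod>i<N. (x * q ^ i) * (1 - q ^ (N - i) / z))"
  proof (rule prod.cong[OF refl])
    fix i assume "i \<in> {..<N}"
    hence "q ^ i * q ^ (N - i) = q ^ N" by (simp add: power_add[symmetric])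
    thus "1 + x * q ^ i = (x * q ^ i) * (1 - q ^ (N - i) / z)"
      using q z by (simp add: x_def field_simps)
  qed
  also have "\<dots> = (\<Prod>i<N. x * q ^ i) * (\<Prod>i<N. 1 - q ^ Suc i / z)"
    by (simp add: prod.distrib prod_reflect[of "\<lambda>k. 1 - q ^ k / z"])
  also have "(\<Prod>i<N. x * q ^ i) = x ^ N * q ^ tri N"
    by (simp add: prod.distrib power_sum[symmetric] sum_lessThan_tri)
  finally have L: "(\<Prod>i<2*N. 1 + x * q ^ i) = x ^ N * q ^ tri N * (\<Prod>i<N. (1 - z * q ^ i) * (1 - q ^ Suc i / z))"
    by (simp add: prod.distrib mult_ac)
  have "(\<Sum>k\<le>2*N. gb q (2*N) k * q ^ tri k * x ^ k)
      = (\<Sum>j\<in>{- int N..int N}. gb q (2*N) (nat (int N + j)) * q ^ tri (nat (int N + j)) * x ^ nat (int N + j))"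
    by (rule sum.reindex_bij_witness[where i = "\<lambda>j. nat (int N + j)" and j = "\<lambda>k. int k - int N"]) auto
  also have "\<dots> = (\<Sum>j\<in>{- int N..int N}. x ^ N * q ^ tri N * (gb q (2*N) (nat (int N + j)) * ((-1) powi j * q powi T j * z powi j)))"
  proof (rule sum.cong[OF refl])
    fix j assume "j \<in> {- int N..int N}"
    hence "0 \<le> int N + j" by simp
    from key_term[OF q z this] show "gb q (2*N) (nat (int N + j)) * q ^ tri (nat (int N + j)) * x ^ nat (int N + j)
      = x ^ N * q ^ tri N * (gb q (2*N) (nat (int N + j)) * ((-1) powi j * q powi T j * z powi j))"
      unfolding x_def by (simp add: mult_ac)
  qed
  also have "\<dots> = x ^ N * q ^ tri N * (\<Sum>j\<in>{- int N..int N}. gb q (2*N) (nat (int N + j)) * ((-1) powi j * q powi T j * z powi j))"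
    by (simp add: sum_distrib_left)
  finally have R: "(\<Sum>k\<le>2*N. gb q (2*N) k * q ^ tri k * x ^ k) = x ^ N * q ^ tri N * (\<Sum>j\<in>{- int N..int N}. gb q (2*N) (nat (int N + j)) * ((-1) powi j * q powi T j * z powi j))" .
  have "x ^ N * q ^ tri N * (\<Prod>i<N. (1 - z * q ^ i) * (1 - q ^ Suc i / z)) = x ^ N * q ^ tri N * (\<Sum>j\<in>{- int N..int N}. gb q (2*N) (nat (int N + j)) * ((-1) powi j * q powi T j * z powi j))"
    using L R rothe[where M="2*N" and x=x and q=q] by metis
  thus ?thesis by (rule mult_left_cancel[OF xnz, THEN iffD1])
qed



lemma summable_tri:
  fixes r y :: real assumes r: "0 \<le> r" "r < 1" and y: "0 \<le> y"
  shows "summable (\<lambda>k. r ^ tri k * y ^ k)"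
proof -
  have "(\<lambda>n. r ^ n * y) \<longlonglongrightarrow> 0 * y"
    using r by (intro tendsto_mult LIMSEQ_power_zero tendsto_const) auto
  hence "eventually (\<lambda>n. r ^ n * y < 1/2) sequentially"
    by (intro order_tendstoD) auto
  then obtain N where N: "\<And>n. n \<ge> N \<Longrightarrow> r ^ n * y < 1/2"
    by (auto simp: eventually_at_top_linorder)
  show ?thesis
  proof (rule summable_ratio_test[of "1/2" N])
    fix n assume "n \<ge> N"
    hence "r ^ n * y \<le> 1/2" using N by (simp add: less_imp_le)
    hence "(r ^ n * y) * (r ^ tri n * y ^ n) \<le> 1/2 * (r ^ tri n * y ^ n)"
      using r y by (intro mult_right_mono) auto
    thus "norm (r ^ tri (Suc n) * y ^ Suc n) \<le> 1/2 * norm (r ^ tri n * y ^ n)"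
      using r y by (simp add: tri_Suc power_add abs_mult mult_ac)
  qed simp
qed

lemma sum_int_split:
  fixes g :: "int \<Rightarrow> 'a::comm_monoid_add"
  shows "(\<Sum>j\<in>{- int N..int N}. g j) = (\<Sum>k<Suc N. g (int k)) + (\<Sum>k<N. g (- int k - 1))"
proof (induction N)
  case 0 thus ?case by simp
next
  case (Suc N)
  have e: "{- int (Suc N)..int (Suc N)} = insert (- int N - 1) (insert (int N + 1) {- int N..int N})"
    by (auto simp: atLeastAtMost_iff)
  have "(\<Sum>j\<in>{- int (Suc N)..int (Suc N)}. g j) = g (- int N - 1) + (g (int N + 1) + (\<Sum>j\<in>{- int N..int N}. g j))"
    unfolding e by (simp add: sum.insert)
  thus ?case using Suc by (simp add: add_ac)
qed
lemma has_sum_int_split: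
  fixes f :: "int \<Rightarrow> 'a::banach"
  assumes s1: "summable (\<lambda>k. norm (f (int k)))" and s2: "summable (\<lambda>k. norm (f (- int k - 1)))"
  shows "(f has_sum ((\<Sum>k. f (int k)) + (\<Sum>k. f (- int k - 1)))) UNIV"
proof -
  have h1: "((\<lambda>k. f (int k)) has_sum (\<Sum>k. f (int k))) UNIV"
    by (rule norm_summable_imp_has_sum[OF s1 summable_sums[OF summable_norm_cancel[OF s1]]])
  have h2: "((\<lambda>k. f (- int k - 1)) has_sum (\<Sum>k. f (- int k - 1))) UNIV"
    by (rule norm_summable_imp_has_sum[OF s2 summable_sums[OF summable_norm_cancel[OF s2]]])
  have b1: "bij_betw int UNIV {0..}"
    by (rule bij_betwI[where g=nat]) auto
  have b2: "bij_betw (\<lambda>k. - int k - 1) UNIV {..<0}"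
    by (rule bij_betwI[where g="\<lambda>j. nat (- j - 1)"]) auto
  have "(f has_sum (\<Sum>k. f (int k))) {0..}"
    using h1 has_sum_reindex_bij_betw[OF b1, of f] by simp
  moreover have "(f has_sum (\<Sum>k. f (- int k - 1))) {..<0}"
    using h2 has_sum_reindex_bij_betw[OF b2, of f] by simp
  ultimately have "(f has_sum ((\<Sum>k. f (int k)) + (\<Sum>k. f (- int k - 1)))) ({0..} \<union> {..<0})"
    by (rule has_sum_Un_disjoint) auto
  moreover have "{0..} \<union> {..<0::int} = UNIV" by auto
  ultimately show ?thesis by simp
qed

definition th :: "complex \<Rightarrow> complex \<Rightarrow> int \<Rightarrow> complex" where
  "th q z j = (-1) powi j * q powi T j * z powi j"

lemma tri_Suc_Suc: "tri (Suc (Suc k)) = tri k + 2 * k + 1"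
  by (simp add: tri_Suc)

lemma T_neg: "T (- int k - 1) = int (tri (Suc (Suc k)))"
  unfolding tri_T T_def by (simp add: algebra_simps)

lemma th_norm1: "norm (th q z (int k)) = norm q ^ tri k * norm z ^ k"
proof -
  have "norm (q powi T (int k)) = norm q ^ tri k"
    by (simp add: tri_T[symmetric] norm_power)
  thus ?thesis by (simp add: th_def norm_mult norm_power_int norm_power)
qed

lemma th_norm2: "norm (th q z (- int k - 1)) = norm q * inverse (norm z) * (norm q ^ tri k * (norm q ^ 2 * inverse (norm z)) ^ k)"
proof -
  have "norm (q powi T (- int k - 1)) = norm q ^ tri (Suc (Suc k))"
    by (simp add: T_neg norm_power)
  moreover have "norm (z powi (- int k - 1)) = inverse (norm z) ^ Suc k"
    by (simp add: norm_power_int power_int_diff power_int_minus field_simps norm_divide norm_mult norm_power)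
  moreover have "norm ((-1::complex) powi (- int k - 1)) = 1"
    by (simp add: norm_power_int)
  ultimately show ?thesis
    using power_mult[of "norm q" k 2] power_mult[of "norm q" 2 k]
    by (simp add: th_def norm_mult tri_Suc_Suc power_add power_mult_distrib mult_ac)
qed

lemma th_summ:
  assumes "norm q < 1"
  shows "summable (\<lambda>k. norm (th q z (int k)))" "summable (\<lambda>k. norm (th q z (- int k - 1)))"
proof -
  show "summable (\<lambda>k. norm (th q z (int k)))"
    unfolding th_norm1 using assms by (intro summable_tri) auto
  show "summable (\<lambda>k. norm (th q z (- int k - 1)))"
    unfolding th_norm2 using assms by (intro summable_mult summable_tri) auto
qed



definition cc :: "complex \<Rightarrow> nat \<Rightarrow> int \<Rightarrow> complex" where
  "cc q N j = (if \<bar>j\<bar> \<le> int N then gb q (2*N) (nat (int N + j)) else 0)"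

lemma jtp:
  fixes q z :: complex
  assumes q0: "q \<noteq> 0" and q1: "norm q < 1" and z: "z \<noteq> 0"
  shows "(th q z has_sum (qpoch_inf q q * qtheta z q)) UNIV"
proof -
  define Q where "Q = qpoch_inf q q"
  have Qnz: "Q \<noteq> 0" unfolding Q_def by (rule Q_nz[OF q1])
  define s where "s N k = cc q N (int k) * th q z (int k) + cc q N (- int k - 1) * th q z (- int k - 1)" for N k
  define P where "P N = (\<Prod>i<N. (1 - z * q ^ i) * (1 - q ^ Suc i / z))" for N
  have sumP: "suminf (s N) = P N" for N
  proof -
    have "P N = (\<Sum>j\<in>{- int N..int N}. cc q N j * th q z j)"
      unfolding P_def fin_jtp[OF q0 z] by (rule sum.cong) (auto simp: cc_def th_def)
    also have "\<dots> = (\<Sum>k<Suc N. cc q N (int k) * th q z (int k)) + (\<Sum>k<N. cc q N (- int k - 1) * th q z (- int k - 1))"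
      by (rule sum_int_split)
    also have "(\<Sum>k<N. cc q N (- int k - 1) * th q z (- int k - 1)) = (\<Sum>k<Suc N. cc q N (- int k - 1) * th q z (- int k - 1))"
      by (simp add: cc_def)
    also have "(\<Sum>k<Suc N. cc q N (int k) * th q z (int k)) + \<dots> = (\<Sum>k<Suc N. s N k)"
      by (simp add: s_def sum.distrib)
    also have "\<dots> = suminf (s N)"
      by (rule suminf_finite[symmetric]) (auto simp: s_def cc_def)
    finally show ?thesis ..
  qed
  have limP: "P \<longlonglongrightarrow> qtheta z q"
  proof -
    have "(\<lambda>N. (\<Prod>i<N. 1 - z * q ^ i) * (\<Prod>i<N. 1 - (q / z) * q ^ i)) \<longlonglongrightarrow> qpoch_inf z q * qpoch_inf (q/z) q"
      by (intro tendsto_mult qp_lim q1)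
    moreover have "(\<Prod>i<N. 1 - z * q ^ i) * (\<Prod>i<N. 1 - (q / z) * q ^ i) = P N" for N
      unfolding P_def prod.distrib by (simp add: mult_ac)
    ultimately show ?thesis by (simp add: qtheta_def)
  qed
  obtain K where K: "K > 0" "\<And>M k. norm (gb q M k) \<le> K" using gb_bound[OF q1] by blast
  have ccb: "norm (cc q N j) \<le> K" for N j
    using K by (simp add: cc_def)
  define Mb where "Mb k = K * (norm (th q z (int k)) + norm (th q z (- int k - 1)))" for k
  have Mbs: "summable Mb"
    unfolding Mb_def using th_summ[OF q1, of z] by (intro summable_mult summable_add) auto
  have lim_s: "(\<lambda>N. s N k) \<longlonglongrightarrow> inverse Q * th q z (int k) + inverse Q * th q z (- int k - 1)" for k
    unfolding s_def cc_def Q_def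
    by (intro tendsto_intros gb_lim[OF q1])
  have bound: "eventually (\<lambda>(k, N). norm (s N k) \<le> Mb k) (at_top \<times>\<^sub>F sequentially)"
  proof (intro always_eventually allI, clarify)
    fix k N
    have "norm (s N k) \<le> norm (cc q N (int k)) * norm (th q z (int k)) + norm (cc q N (- int k - 1)) * norm (th q z (- int k - 1))"
      unfolding s_def by (metis norm_mult norm_triangle_ineq)
    also have "\<dots> \<le> K * norm (th q z (int k)) + K * norm (th q z (- int k - 1))"
      by (intro add_mono mult_right_mono ccb) auto
    finally show "norm (s N k) \<le> Mb k" by (simp add: Mb_def distrib_left)
  qed
  from tannerys_theorem[of "\<lambda>k N. s N k", OF lim_s bound Mbs]
  have "(\<lambda>N. suminf (s N)) \<longlonglongrightarrow> (\<Sum>k. inverse Q * th q z (int k) + inverse Q * th q z (- int k - 1))"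
    by simp
  hence "P \<longlonglongrightarrow> (\<Sum>k. inverse Q * th q z (int k) + inverse Q * th q z (- int k - 1))"
    by (simp add: sumP)
  hence eq: "qtheta z q = (\<Sum>k. inverse Q * th q z (int k) + inverse Q * th q z (- int k - 1))"
    using limP LIMSEQ_unique by blast
  have S1: "summable (\<lambda>k. th q z (int k))" "summable (\<lambda>k. th q z (- int k - 1))"
    using th_summ[OF q1, of z] by (auto intro: summable_norm_cancel)
  have "(\<Sum>k. inverse Q * th q z (int k) + inverse Q * th q z (- int k - 1))
     = inverse Q * ((\<Sum>k. th q z (int k)) + (\<Sum>k. th q z (- int k - 1)))"
    using S1 by (simp add: suminf_add[symmetric] suminf_mult summable_mult distrib_left)
  with eq have "Q * qtheta z q = (\<Sum>k. th q z (int k)) + (\<Sum>k. th q z (- int k - 1))"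
    using Qnz by simp
  with has_sum_int_split[OF th_summ[OF q1, of z]] show ?thesis
    by (simp add: Q_def)
qed



lemma th_abs:
  assumes "norm q < 1"
  shows "(\<lambda>x. norm ((th q z) x)) summable_on UNIV"
proof -
  have "((\<lambda>j. norm (th q z j)) has_sum ((\<Sum>k. norm (th q z (int k))) + (\<Sum>k. norm (th q z (- int k - 1))))) UNIV"
    using th_summ[OF assms, of z] by (intro has_sum_int_split) auto
  thus ?thesis by (auto simp: summable_on_def)
qed

lemma has_sum_prod_UNIV:
  fixes f g :: "'a \<Rightarrow> complex"
  assumes f: "(f has_sum A) UNIV" and g: "(g has_sum B) UNIV"
    and fa: "(\<lambda>x. norm ((f) x)) summable_on UNIV" and ga: "(\<lambda>x. norm ((g) x)) summable_on UNIV"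
  shows "((\<lambda>(x, y). f x * g y) has_sum (A * B)) UNIV"
proof -
  have "(\<lambda>p. norm ((\<lambda>(x, y). f x * g y) p)) summable_on Sigma UNIV (\<lambda>_. UNIV)"
  proof (rule Infinite_Sum.abs_summable_on_Sigma_iff[THEN iffD2], intro conjI ballI)
    fix x :: 'a
    show "(\<lambda>y. norm (case (x, y) of (x, y) \<Rightarrow> f x * g y)) summable_on UNIV"
      using ga by (simp add: norm_mult summable_on_cmult_right)
  next
    have e: "(\<lambda>x. infsum (\<lambda>y. norm (case (x, y) of (x, y) \<Rightarrow> f x * g y)) UNIV)
        = (\<lambda>x. norm (f x) * infsum (\<lambda>y. norm (g y)) UNIV)"
      by (simp add: norm_mult infsum_cmult_right')
    have "(\<lambda>x. norm (norm (f x) * infsum (\<lambda>y. norm (g y)) UNIV)) summable_on UNIV"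
      using fa by (simp add: summable_on_cmult_left abs_mult)
    thus "(\<lambda>x. norm (infsum (\<lambda>y. norm (case (x, y) of (x, y) \<Rightarrow> f x * g y)) UNIV)) summable_on UNIV"
      by (simp add: norm_mult infsum_cmult_right')
  qed
  hence sm: "(\<lambda>(x, y). f x * g y) summable_on Sigma UNIV (\<lambda>_. UNIV)"
    by (simp add: summable_on_iff_abs_summable_on_complex)
  have "((\<lambda>(x, y). f x * g y) has_sum (A * B)) (Sigma UNIV (\<lambda>_. UNIV))"
  proof (rule has_sum_SigmaI[where g = "\<lambda>x. f x * B"])
    fix x :: 'a
    show "((\<lambda>y. case (x, y) of (x, y) \<Rightarrow> f x * g y) has_sum f x * B) UNIV"
      using g by (simp add: has_sum_cmult_right)
  next
    show "((\<lambda>x. f x * B) has_sum A * B) UNIV"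
      using f by (rule has_sum_cmult_left)
  qed (rule sm)
  thus ?thesis by simp
qed



lemma T2: "2 * T a = a * (a - 1)"
proof -
  have "even (a * (a - 1))" by auto
  thus ?thesis unfolding T_def by simp
qed

lemma m1_even: "(-1::complex) powi (2 * k) = 1"
  by (simp add: power_int_mult)

lemma F_eq:
  fixes q b c :: complex
  assumes q: "q \<noteq> 0" and b: "b \<noteq> 0" and c: "c \<noteq> 0"
  shows "th q (-b) (i+j) * th q c (i-j) + th q b (i+j) * th q (-c) (i-j)
       = 2 * (th (q^2) (b*c) i * th (q^2) (b*q/c) j)"
proof -
  define s where "s = (-1::complex) powi (i+j)"
  define E where "E = 2 * T i + 2 * T j + j"
  have f1: "(-1::complex) powi (i-j) = s"
  proof -
    have "s = (-1) powi ((i - j) + 2 * j)" unfolding s_def by (simp add: add.commute)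
    also have "\<dots> = (-1) powi (i - j) * (-1) powi (2 * j)" by (rule power_int_add) simp
    finally show ?thesis by (simp add: m1_even)
  qed
  have f2: "s * s = 1"
  proof -
    have "s * s = (-1) powi ((i + j) + (i + j))" unfolding s_def by (rule power_int_add[symmetric]) simp
    also have "(i + j) + (i + j) = 2 * (i + j)" by simp
    finally show ?thesis by (simp add: m1_even)
  qed
  have f3: "(- x) powi k = (-1) powi k * x powi k" for x :: complex and k
    using power_int_mult_distrib[of "-1" x k] by simp
  have f4: "q powi T (i+j) * q powi T (i-j) = q powi E"
  proof -
    have "T (i+j) + T (i-j) = E"
      using T2[of i] T2[of j] T2[of "i+j"] T2[of "i-j"] unfolding E_def
      by (simp add: algebra_simps)
    thus ?thesis using q by (simp add: power_int_add[symmetric])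
  qed
  have f5: "(q^2) powi T i * (q^2) powi T j * q powi j = q powi E"
    using q by (simp add: power_int_power power_int_add[symmetric] E_def)
  have f6: "(-1::complex) powi i * (-1) powi j = s"
    unfolding s_def by (rule power_int_add[symmetric]) simp
  have f7: "b powi i * b powi j = b powi (i+j)" using b by (simp add: power_int_add)
  have f8: "c powi i / c powi j = c powi (i-j)" using c by (simp add: power_int_diff)
  have L: "th q (-b) (i+j) * th q c (i-j) + th q b (i+j) * th q (-c) (i-j)
      = 2 * (s * (q powi T (i+j) * q powi T (i-j)) * b powi (i+j) * c powi (i-j))"
    unfolding th_def f3[of b] f3[of c] f1 s_def[symmetric]
    using f2 by (simp add: algebra_simps)
  have R: "th (q^2) (b*c) i * th (q^2) (b*q/c) j
      = ((-1) powi i * (-1) powi j) * ((q^2) powi T i * (q^2) powi T j * q powi j) * (b powi i * b powi j) * (c powi i / c powi j)"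
    unfolding th_def by (simp add: power_int_mult_distrib power_int_divide_distrib field_simps)
  show ?thesis unfolding L R f4 f5 f6 f7 f8 by simp
qed



lemma m1_parity: "(-1::complex) powi k = (if even k then 1 else -1)"
proof (cases "even k")
  case True
  then obtain t where "k = 2 * t" by (auto elim!: evenE)
  thus ?thesis using True by (simp add: m1_even)
next
  case False
  then obtain t where t: "k = 2 * t + 1" by (auto elim!: oddE)
  have "(-1::complex) powi (2 * t + 1) = (-1) powi (2 * t) * (-1) powi 1"
    by (rule power_int_add) simp
  thus ?thesis using False t by (simp add: m1_even)
qed

lemma two_var_q:
  fixes q b c :: complex
  assumes q0: "q \<noteq> 0" and q1: "norm q < 1" and b: "b \<noteq> 0" and c: "c \<noteq> 0"
  shows "(qpoch_inf q q)^2 * (qtheta (-b) q * qtheta c q + qtheta b q * qtheta (-c) q)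
       = 2 * (qpoch_inf (q^2) (q^2))^2 * qtheta (b*c) (q^2) * qtheta (b*q/c) (q^2)"
proof -
  define Q where "Q = qpoch_inf q q"
  define Q2 where "Q2 = qpoch_inf (q^2) (q^2)"
  have q20: "q^2 \<noteq> 0" and q21: "norm (q^2) < 1" using q0 q1
    by (auto simp: norm_power power_less_one_iff)
  define F where "F = (\<lambda>(m, n). th q (-b) m * th q c n + th q b m * th q (-c) n)"
  define G where "G = (\<lambda>(i, j). th (q^2) (b*c) i * th (q^2) (b*q/c) j)"
  have hF: "(F has_sum (Q * qtheta (-b) q * (Q * qtheta c q) + Q * qtheta b q * (Q * qtheta (-c) q))) UNIV"
  proof -
    have "((\<lambda>(m, n). th q (-b) m * th q c n) has_sum (Q * qtheta (-b) q * (Q * qtheta c q))) UNIV"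
      unfolding Q_def using b c q0 q1
      by (intro has_sum_prod_UNIV jtp th_abs) auto
    moreover have "((\<lambda>(m, n). th q b m * th q (-c) n) has_sum (Q * qtheta b q * (Q * qtheta (-c) q))) UNIV"
      unfolding Q_def using b c q0 q1
      by (intro has_sum_prod_UNIV jtp th_abs) auto
    ultimately show ?thesis
      unfolding F_def by (rule has_sum_add[THEN has_sum_cong[THEN iffD1, rotated]]) auto
  qed
  have hG: "(G has_sum (Q2 * qtheta (b*c) (q^2) * (Q2 * qtheta (b*q/c) (q^2)))) UNIV"
    unfolding G_def Q2_def using b c q20 q21 q0
    by (intro has_sum_prod_UNIV jtp th_abs) auto
  define Ev where "Ev = {p :: int \<times> int. even (fst p + snd p)}"
  have "((\<lambda>p. 2 * G p) has_sum (2 * (Q2 * qtheta (b*c) (q^2) * (Q2 * qtheta (b*q/c) (q^2))))) UNIV"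
    using hG by (rule has_sum_cmult_right)
  hence "((\<lambda>p. 2 * G ((fst p + snd p) div 2, (fst p - snd p) div 2)) has_sum
      (2 * (Q2 * qtheta (b*c) (q^2) * (Q2 * qtheta (b*q/c) (q^2))))) Ev"
  proof (rule has_sum_reindex_bij_witness[where i = "\<lambda>p. ((fst p + snd p) div 2, (fst p - snd p) div 2)"
      and j = "\<lambda>(i, j). (i + j, i - j)", THEN iffD1, rotated -1])
  qed (auto simp: Ev_def, presburger)
  moreover have "F p = (if p \<in> Ev then 2 * G ((fst p + snd p) div 2, (fst p - snd p) div 2) else 0)" for p
  proof (cases p)
    case (Pair m n)
    show ?thesis
    proof (cases "even (m + n)")
      case True
      define i where "i = (m + n) div 2"
      define j where "j = (m - n) div 2"
      have "m = i + j" "n = i - j" using True unfolding i_def j_def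
        by (auto elim!: evenE simp: algebra_simps) presburger+
      thus ?thesis using True Pair F_eq[OF q0 b c, of i j]
        by (simp add: F_def G_def Ev_def i_def[symmetric] j_def[symmetric])
    next
      case False
      hence "odd m \<noteq> odd n" by auto
      hence z: "(-1::complex) powi m + (-1) powi n = 0"
        by (auto simp: m1_parity)
      have f3: "(- x) powi k = (-1) powi k * x powi k" for x :: complex and k
        using power_int_mult_distrib[of "-1" x k] by simp
      have "F p = th q b m * th q c n * ((-1) powi m + (-1) powi n)"
        unfolding Pair F_def th_def f3[of b] f3[of c] by (simp add: algebra_simps)
      thus ?thesis using z False Pair by (simp add: Ev_def)
    qed
  qed
  ultimately have "(F has_sum (2 * (Q2 * qtheta (b*c) (q^2) * (Q2 * qtheta (b*q/c) (q^2))))) UNIV"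
    by (subst has_sum_cong_neutral[where T = Ev and g = "\<lambda>p. 2 * G ((fst p + snd p) div 2, (fst p - snd p) div 2)"]) auto
  with hF have "Q * qtheta (-b) q * (Q * qtheta c q) + Q * qtheta b q * (Q * qtheta (-c) q)
     = 2 * (Q2 * qtheta (b*c) (q^2) * (Q2 * qtheta (b*q/c) (q^2)))"
    using has_sum_unique by blast
  thus ?thesis unfolding Q_def[symmetric] Q2_def[symmetric]
    by (simp add: power2_eq_square algebra_simps)
qed



lemma prod_even_odd:
  fixes f :: "nat \<Rightarrow> 'a::comm_monoid_mult" and N :: nat
  shows "(\<Prod>k<2*N. f k) = (\<Prod>k<N. f (2*k)) * (\<Prod>k<N. f (2*k+1))"
  by (induction N) (simp_all add: mult_ac)

lemma q_split:
  fixes q :: complex assumes q1: "norm q < 1"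
  shows "qpoch_inf q q = qpoch_inf q (q^2) * qpoch_inf (q^2) (q^2)"
proof -
  have q21: "norm (q^2) < 1" using q1 by (auto simp: norm_power power_less_one_iff)
  have "filterlim (\<lambda>N::nat. 2 * N) at_top at_top"
    unfolding filterlim_at_top eventually_at_top_linorder
  proof
    fix Z :: nat show "\<exists>N0. \<forall>N\<ge>N0. Z \<le> 2 * N" by (rule exI[of _ Z]) auto
  qed
  hence L1: "(\<lambda>N. \<Prod>k<2*N. 1 - q * q ^ k) \<longlonglongrightarrow> qpoch_inf q q"
    by (rule filterlim_compose[OF qp_lim[OF q1]])
  have L2: "(\<lambda>N. (\<Prod>k<N. 1 - q * (q^2) ^ k) * (\<Prod>k<N. 1 - q^2 * (q^2) ^ k))
      \<longlonglongrightarrow> qpoch_inf q (q^2) * qpoch_inf (q^2) (q^2)"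
    by (intro tendsto_mult qp_lim q21)
  have "(\<Prod>k<2*N. 1 - q * q ^ k) = (\<Prod>k<N. 1 - q * (q^2) ^ k) * (\<Prod>k<N. 1 - q^2 * (q^2) ^ k)" for N
  proof -
    have pe: "(q^2)^k = (q^k)^2" for k :: nat by (metis power_mult mult.commute)
    show ?thesis unfolding prod_even_odd by (simp add: power_mult power2_eq_square power_mult_distrib mult_ac)
  qed
  with L1 L2 show ?thesis using LIMSEQ_unique by auto
qed

lemma qpoch_0: "qpoch_inf z 0 = 1 - z"
proof -
  have "qpoch_inf z 0 = (\<Prod>n\<in>{0}. 1 - z * 0 ^ n)"
    unfolding qpoch_inf_def by (rule prodinf_finite) auto
  thus ?thesis by simp
qed

lemma two_var:
  fixes q b c :: complex
  assumes q1: "norm q < 1" and b: "b \<noteq> 0" and c: "c \<noteq> 0"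
  shows "(qpoch_inf q (q^2))^2 * (qtheta (-b) q * qtheta c q + qtheta b q * qtheta (-c) q)
       = 2 * qtheta (b*c) (q^2) * qtheta (b*q/c) (q^2)"
proof (cases "q = 0")
  case True
  thus ?thesis by (simp add: qtheta_def qpoch_0 algebra_simps)
next
  case False
  have q21: "norm (q^2) < 1" using q1 by (auto simp: norm_power power_less_one_iff)
  have Q2: "qpoch_inf (q^2) (q^2) \<noteq> 0" by (rule Q_nz[OF q21])
  from two_var_q[OF False q1 b c] q_split[OF q1]
  have "(qpoch_inf (q^2) (q^2))^2 * ((qpoch_inf q (q^2))^2 * (qtheta (-b) q * qtheta c q + qtheta b q * qtheta (-c) q))
     = (qpoch_inf (q^2) (q^2))^2 * (2 * qtheta (b*c) (q^2) * qtheta (b*q/c) (q^2))"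
    by (simp add: power_mult_distrib mult_ac)
  thus ?thesis using Q2 by simp
qed

theorem mainTheorem12:
  fixes q a b c :: complex
  assumes "norm q < 1" and "a \<noteq> 0" and "b \<noteq> 0" and "c \<noteq> 0"
  shows "(qpoch_inf q (q^2))^2 *
           (qtheta a q * qtheta b q * qtheta (-c) q
          + qtheta a q * qtheta (-b) q * qtheta c q
          + qtheta (-a) q * qtheta b q * qtheta c q)
       = qpoch_inf a q * qpoch_inf (q / a) q * qtheta (b * c) (q^2) * qtheta (b * q / c) (q^2)
       + qpoch_inf b q * qpoch_inf (q / b) q * qtheta (a * c) (q^2) * qtheta (a * q / c) (q^2)
       + qpoch_inf c q * qpoch_inf (q / c) q * qtheta (a * b) (q^2) * qtheta (a * q / b) (q^2)"
proof -
  note e1 = two_var[OF assms(1) assms(3) assms(4)]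
  note e2 = two_var[OF assms(1) assms(2) assms(4)]
  note e3 = two_var[OF assms(1) assms(2) assms(3)]
  define P where "P = (qpoch_inf q (q^2))^2"
  have "2 * (P * (qtheta a q * qtheta b q * qtheta (-c) q
          + qtheta a q * qtheta (-b) q * qtheta c q
          + qtheta (-a) q * qtheta b q * qtheta c q))
     = qtheta a q * (P * (qtheta (-b) q * qtheta c q + qtheta b q * qtheta (-c) q))
     + qtheta b q * (P * (qtheta (-a) q * qtheta c q + qtheta a q * qtheta (-c) q))
     + qtheta c q * (P * (qtheta (-a) q * qtheta b q + qtheta a q * qtheta (-b) q))"
    by (simp add: algebra_simps)
  also have "\<dots> = 2 * (qtheta a q * qtheta (b*c) (q^2) * qtheta (b*q/c) (q^2)
     + qtheta b q * qtheta (a*c) (q^2) * qtheta (a*q/c) (q^2)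
     + qtheta c q * qtheta (a*b) (q^2) * qtheta (a*q/b) (q^2))"
    unfolding P_def e1 e2 e3 by (simp add: algebra_simps)
  finally have fin0: "2 * (P * (qtheta a q * qtheta b q * qtheta (-c) q
          + qtheta a q * qtheta (-b) q * qtheta c q
          + qtheta (-a) q * qtheta b q * qtheta c q))
     = 2 * (qtheta a q * qtheta (b*c) (q^2) * qtheta (b*q/c) (q^2)
     + qtheta b q * qtheta (a*c) (q^2) * qtheta (a*q/c) (q^2)
     + qtheta c q * qtheta (a*b) (q^2) * qtheta (a*q/b) (q^2))" .
  have fin: "P * (qtheta a q * qtheta b q * qtheta (-c) q
          + qtheta a q * qtheta (-b) q * qtheta c q
          + qtheta (-a) q * qtheta b q * qtheta c q)
     = qtheta a q * qtheta (b*c) (q^2) * qtheta (b*q/c) (q^2)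
     + qtheta b q * qtheta (a*c) (q^2) * qtheta (a*q/c) (q^2)
     + qtheta c q * qtheta (a*b) (q^2) * qtheta (a*q/b) (q^2)"
    by (rule mult_left_cancel[THEN iffD1, OF _ fin0]) simp
  have th: "qpoch_inf x q * qpoch_inf (q / x) q = qtheta x q" for x by (simp add: qtheta_def)
  show ?thesis unfolding th using fin unfolding P_def .
qed

end
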